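(* Let $\varphi:[0,1]\to[0,1]$ be non-decreasing and continuously differentiable with $\varphi(0)=0$, $\varphi(1)=1$, and suppose $z\mapsto z\varphi(z)$ is convex. Consider the problem of finding a piecewise constant function $\psi$ on $[0,1]$ with $2$ pieces (i.e. constant on $[0,z)$ and on $[z,1]$ for some $z\in[0,1]$) such that $\psi\leq\varphi$ on $[0,1]$ and $\int_0^1(\varphi(t)-\psi(t))\,dt$ is minimal. Then the minimum is reached with a step $z$ satisfying $(1-z)\varphi'(z)=\varphi(z)$. *)

theory Defs
  imports "HOL-Analysis.Analysis"
begin

definition step2 :: "real \<Rightarrow> real \<Rightarrow> real \<Rightarrow> real \<Rightarrow> real" where
  "step2 z a b t = (if t < z then a else b)"

definition admissible2 :: "(real \<Rightarrow> real) \<Rightarrow> real \<Rightarrow> real \<Rightarrow> real \<Rightarrow> bool" where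
  "admissible2 \<phi> z a b \<longleftrightarrow> z \<in> {0..1} \<and> (\<forall>t\<in>{0..1}. step2 z a b t \<le> \<phi> t)"

definition err2 :: "(real \<Rightarrow> real) \<Rightarrow> real \<Rightarrow> real \<Rightarrow> real \<Rightarrow> real" where
  "err2 \<phi> z a b = integral {0..1} (\<lambda>t. \<phi> t - step2 z a b t)"

end

theory Submission
  imports Defs
begin

lemma step_int:
  assumes z: "z \<in> {0..1::real}"
  shows "(step2 z a b has_integral (z*a + (1-z)*b)) {0..1}"
proof -
  have i1: "(step2 z a b has_integral (z*a)) {0..z}"
  proof (rule has_integral_spike_finite[of "{z}" _ _ "\<lambda>_. a"])
    show "((\<lambda>_. a) has_integral (z*a)) {0..z}"
      using has_integral_const_real[of a 0 z] z by simp
  qed (auto simp: step2_def)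
  have i2: "(step2 z a b has_integral ((1-z)*b)) {z..1}"
  proof (rule has_integral_spike_finite[of "{}" _ _ "\<lambda>_. b"])
    show "((\<lambda>_. b) has_integral ((1-z)*b)) {z..1}"
      using has_integral_const_real[of b z 1] z by simp
  qed (auto simp: step2_def)
  show ?thesis using has_integral_combine[OF _ _ i1 i2] z by auto
qed

theorem proposition3:
  fixes \<phi> \<phi>' :: "real \<Rightarrow> real"
  assumes "mono_on {0..1} \<phi>"
    and "\<phi> ` {0..1} \<subseteq> {0..1}"
    and "\<phi> 0 = 0" and "\<phi> 1 = 1"
    and "\<And>t. t \<in> {0..1} \<Longrightarrow> (\<phi> has_real_derivative \<phi>' t) (at t within {0..1})"
    and "continuous_on {0..1} \<phi>'"
    and "convex_on {0..1} (\<lambda>z. z * \<phi> z)"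
  shows "\<exists>z a b. admissible2 \<phi> z a b
           \<and> (\<forall>z' a' b'. admissible2 \<phi> z' a' b' \<longrightarrow> err2 \<phi> z a b \<le> err2 \<phi> z' a' b')
           \<and> (1 - z) * \<phi>' z = \<phi> z"
proof -
  note mono = assms(1) and rng = assms(2) and der = assms(5)
  have cont: "continuous_on {0..1} \<phi>"
    using der DERIV_continuous continuous_on_eq_continuous_within by blast
  define g where "g z = (1 - z) * \<phi> z" for z
  have gcont: "continuous_on {0..1} g"
    unfolding g_def by (intro continuous_intros cont)
  obtain z where z: "z \<in> {0..1}" and zmax: "\<And>y. y \<in> {0..1} \<Longrightarrow> g y \<le> g z"
    using continuous_attains_sup[OF compact_Icc _ gcont] by auto
  have phinn: "\<And>t. t \<in> {0..1} \<Longrightarrow> 0 \<le> \<phi> t" using rng by fastforce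
  have gpos: "g z > 0"
  proof (rule ccontr)
    assume "\<not> g z > 0"
    hence le0: "\<And>y. y \<in> {0..1} \<Longrightarrow> g y \<le> 0" using zmax by force
    have "continuous (at 1 within {0..1}) \<phi>"
      using cont continuous_on_eq_continuous_within[of "{0..1}" \<phi>] by simp
    then obtain d where d: "d > 0" and dd: "\<And>t. t \<in> {0..1} \<Longrightarrow> dist t 1 < d \<Longrightarrow> dist (\<phi> t) (\<phi> 1) < 1/2"
      unfolding continuous_within_eps_delta by (meson divide_pos_pos zero_less_one zero_less_numeral)
    define t where "t = max 0 (1 - d/2)"
    have t: "t \<in> {0..1}" "t < 1" "dist t 1 < d" using d by (auto simp: t_def dist_real_def)
    have "\<phi> t > 1/2" using dd[OF t(1) t(3)] assms(4) by (auto simp: dist_real_def abs_if split: if_splits)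
    hence "g t > 0" using t unfolding g_def by simp
    thus False using le0[OF t(1)] by simp
  qed
  have z01: "0 < z" "z < 1" using gpos z assms(3) unfolding g_def by (auto simp: order_le_less)
  have dg: "(g has_real_derivative ((-1) * \<phi> z + (1 - z) * \<phi>' z)) (at z within {0..1})"
    unfolding g_def by (auto intro!: derivative_eq_intros der z)
  have "interior {0..1::real} = {0<..<1}" by simp
  hence "at z within {0..1} = at z" using z01 by (intro at_within_interior) auto
  with dg have dg': "DERIV g z :> ((-1) * \<phi> z + (1 - z) * \<phi>' z)" by simp
  have "(-1) * \<phi> z + (1 - z) * \<phi>' z = 0"
  proof (rule DERIV_local_max[OF dg'])
    show "0 < min z (1 - z)" using z01 by simp
    show "\<forall>y. \<bar>z - y\<bar> < min z (1 - z) \<longrightarrow> g y \<le> g z"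
      using zmax by (auto simp: abs_less_iff)
  qed
  hence key: "(1 - z) * \<phi>' z = \<phi> z" by simp
  have phiint: "\<phi> integrable_on {0..1}" using cont integrable_continuous_real by blast
  have err: "err2 \<phi> z' a' b' = integral {0..1} \<phi> - (z'*a' + (1-z')*b')" if "z' \<in> {0..1}" for z' a' b'
    unfolding err2_def using integral_diff[OF phiint has_integral_integrable[OF step_int[OF that]]]
      integral_unique[OF step_int[OF that]] by simp
  have adm: "admissible2 \<phi> z 0 (\<phi> z)"
    unfolding admissible2_def step2_def
  proof (intro conjI ballI z)
    fix t :: real assume t: "t \<in> {0..1}"
    show "(if t < z then 0 else \<phi> z) \<le> \<phi> t"
      using phinn[OF t] mono_onD[OF mono z t] by auto
  qed
  have opt: "err2 \<phi> z 0 (\<phi> z) \<le> err2 \<phi> z' a' b'" if a: "admissible2 \<phi> z' a' b'" for z' a' b'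
  proof -
    have z': "z' \<in> {0..1}" and st: "\<And>t. t \<in> {0..1} \<Longrightarrow> step2 z' a' b' t \<le> \<phi> t"
      using a unfolding admissible2_def by auto
    have 1: "z' * a' \<le> 0"
    proof (cases "z' = 0")
      case False
      hence "a' \<le> 0" using st[of 0] z' assms(3) by (auto simp: step2_def)
      thus ?thesis using z' by (simp add: mult_nonneg_nonpos)
    qed simp
    have 2: "(1 - z') * b' \<le> (1 - z') * \<phi> z'"
    proof (cases "z' = 1")
      case False
      hence "b' \<le> \<phi> z'" using st[of z'] z' by (auto simp: step2_def)
      thus ?thesis using z' by (simp add: mult_left_mono)
    qed simp
    have "g z' \<le> g z" using zmax z' by simp
    thus ?thesis using 1 2 err[OF z] err[OF z'] unfolding g_def by simp
  qed
  show ?thesis using adm opt key by blast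
qed

end
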